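(* There exists a structure $\langle M,\mathsf{S}\rangle$, with $M$ a set and $\mathsf{S}\subseteq M\times\mathcal{P}(M)$, that satisfies (S1), (S2), (S3), (S4), the condition ($\mathrm{S}\Sigma$): "for every $x\in M$ and every non-empty family $\mathcal{A}$ of subsets of $M$ with $x\,\mathsf{S}\,A$ for all $A\in\mathcal{A}$, one has $x\,\mathsf{S}\,\bigcup\mathcal{A}$", and the condition "for all $x,y\in M$, $x\,\mathsf{S}\,\{y\}$ implies $x=y$", but does not satisfy (S5).
   Context: For a set $M$ and a relation $\mathsf{S}\subseteq M\times\mathcal{P}(M)$ define: $x\sqsubseteq_{\mathsf{S}} y$ iff there is $X\subseteq M$ with $y\,\mathsf{S}\,X$ and $x\in X$; $\mathrm{I}(x)=\{y\in M\mid y\sqsubseteq_{\mathsf{S}} x\}$ and for $A\subseteq M$, $\mathrm{I}(A)=\bigcup_{a\in A}\mathrm{I}(a)$; $x$ s-overlaps $y$ iff there are $X,Y\subseteq M$ with $x\,\mathsf{S}\,X$, $y\,\mathsf{S}\,Y$, $X\cap Y\neq\emptyset$; a set $A\subseteq M$ is pre-dense in $B\subseteq M$ iff for every $b\in B$ there is $a\in A$ such that $a$ s-overlaps $b$. Axioms: (S1) for every non-empty $X\subseteq M$ there is $x\in M$ with $x\,\mathsf{S}\,X$; (S2) $x\,\mathsf{S}\,X\wedge y\,\mathsf{S}\,X\to x=y$; (S3) $x\,\mathsf{S}\,X\wedge y\,\mathsf{S}\,Y\wedge x\in Y\to y\,\mathsf{S}\,(X\cup Y)$; (S4) if $x\,\mathsf{S}\,X$,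 $x\,\mathsf{S}\,Y$ and $y\in Y$, then there are $z\in X$ and $Z,U\subseteq M$ with $z\,\mathsf{S}\,Z$, $y\,\mathsf{S}\,U$ and $Z\cap U\neq\emptyset$; (S5) for all $x\in M$ and $X\subseteq M$: if $X$ is pre-dense in $\mathrm{I}(x)$ then $x\,\mathsf{S}\,(\mathrm{I}(x)\cap\mathrm{I}(X))$. *)

theory Defs
  imports Main
begin

definition rel_on :: "'a set \<Rightarrow> ('a \<Rightarrow> 'a set \<Rightarrow> bool) \<Rightarrow> bool" where
  "rel_on M S \<longleftrightarrow> (\<forall>x X. S x X \<longrightarrow> x \<in> M \<and> X \<subseteq> M)"

definition below :: "'a set \<Rightarrow> ('a \<Rightarrow> 'a set \<Rightarrow> bool) \<Rightarrow> 'a \<Rightarrow> 'a \<Rightarrow> bool" where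
  "below M S x y \<longleftrightarrow> (\<exists>X. X \<subseteq> M \<and> S y X \<and> x \<in> X)"

definition Iel :: "'a set \<Rightarrow> ('a \<Rightarrow> 'a set \<Rightarrow> bool) \<Rightarrow> 'a \<Rightarrow> 'a set" where
  "Iel M S x = {y \<in> M. below M S y x}"

definition Iset :: "'a set \<Rightarrow> ('a \<Rightarrow> 'a set \<Rightarrow> bool) \<Rightarrow> 'a set \<Rightarrow> 'a set" where
  "Iset M S A = (\<Union>a\<in>A. Iel M S a)"

definition soverlaps :: "'a set \<Rightarrow> ('a \<Rightarrow> 'a set \<Rightarrow> bool) \<Rightarrow> 'a \<Rightarrow> 'a \<Rightarrow> bool" where
  "soverlaps M S x y \<longleftrightarrow> (\<exists>X Y. X \<subseteq> M \<and> Y \<subseteq> M \<and> S x X \<and> S y Y \<and> X \<inter> Y \<noteq> {})"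

definition predense :: "'a set \<Rightarrow> ('a \<Rightarrow> 'a set \<Rightarrow> bool) \<Rightarrow> 'a set \<Rightarrow> 'a set \<Rightarrow> bool" where
  "predense M S A B \<longleftrightarrow> (\<forall>b\<in>B. \<exists>a\<in>A. soverlaps M S a b)"

definition S1 :: "'a set \<Rightarrow> ('a \<Rightarrow> 'a set \<Rightarrow> bool) \<Rightarrow> bool" where
  "S1 M S \<longleftrightarrow> (\<forall>X. X \<subseteq> M \<and> X \<noteq> {} \<longrightarrow> (\<exists>x\<in>M. S x X))"

definition S2 :: "'a set \<Rightarrow> ('a \<Rightarrow> 'a set \<Rightarrow> bool) \<Rightarrow> bool" where
  "S2 M S \<longleftrightarrow> (\<forall>x\<in>M. \<forall>y\<in>M. \<forall>X. X \<subseteq> M \<longrightarrow> S x X \<and> S y X \<longrightarrow> x = y)"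

definition S3 :: "'a set \<Rightarrow> ('a \<Rightarrow> 'a set \<Rightarrow> bool) \<Rightarrow> bool" where
  "S3 M S \<longleftrightarrow> (\<forall>x\<in>M. \<forall>y\<in>M. \<forall>X Y. X \<subseteq> M \<and> Y \<subseteq> M \<longrightarrow>
      S x X \<and> S y Y \<and> x \<in> Y \<longrightarrow> S y (X \<union> Y))"

definition S4 :: "'a set \<Rightarrow> ('a \<Rightarrow> 'a set \<Rightarrow> bool) \<Rightarrow> bool" where
  "S4 M S \<longleftrightarrow> (\<forall>x\<in>M. \<forall>y\<in>M. \<forall>X Y. X \<subseteq> M \<and> Y \<subseteq> M \<longrightarrow>
      S x X \<and> S x Y \<and> y \<in> Y \<longrightarrow>
      (\<exists>z\<in>X. \<exists>Z U. Z \<subseteq> M \<and> U \<subseteq> M \<and> S z Z \<and> S y U \<and> Z \<inter> U \<noteq> {}))"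

definition S5 :: "'a set \<Rightarrow> ('a \<Rightarrow> 'a set \<Rightarrow> bool) \<Rightarrow> bool" where
  "S5 M S \<longleftrightarrow> (\<forall>x\<in>M. \<forall>X. X \<subseteq> M \<longrightarrow>
      predense M S X (Iel M S x) \<longrightarrow> S x (Iel M S x \<inter> Iset M S X))"

definition SSigma :: "'a set \<Rightarrow> ('a \<Rightarrow> 'a set \<Rightarrow> bool) \<Rightarrow> bool" where
  "SSigma M S \<longleftrightarrow> (\<forall>x\<in>M. \<forall>\<A>. \<A> \<subseteq> Pow M \<and> \<A> \<noteq> {} \<and> (\<forall>A\<in>\<A>. S x A) \<longrightarrow> S x (\<Union>\<A>))"

definition singleton_cond :: "'a set \<Rightarrow> ('a \<Rightarrow> 'a set \<Rightarrow> bool) \<Rightarrow> bool" where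
  "singleton_cond M S \<longleftrightarrow> (\<forall>x\<in>M. \<forall>y\<in>M. S x {y} \<longrightarrow> x = y)"

end

theory Submission
  imports Defs
begin

definition MM :: "nat set" where "MM = {0,1}"
definition SS :: "nat \<Rightarrow> nat set \<Rightarrow> bool" where
  "SS x X \<longleftrightarrow> X \<subseteq> MM \<and> X \<noteq> {} \<and> x = Max X"

lemma finMM: "X \<subseteq> MM \<Longrightarrow> finite X" unfolding MM_def using finite_subset by blast

lemma ovl: "x \<in> MM \<Longrightarrow> y \<in> MM \<Longrightarrow> soverlaps MM SS x y"
  unfolding soverlaps_def SS_def MM_def
  apply (rule exI[of _ "{0,x}"], rule exI[of _ "{0,y}"]) by auto

theorem mainTheorem11:
  shows "\<exists>(M :: nat set) S. rel_on M S \<and> S1 M S \<and> S2 M S \<and> S3 M S \<and> S4 M S \<and>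
           SSigma M S \<and> singleton_cond M S \<and> \<not> S5 M S"
proof (intro exI conjI)
  show "rel_on MM SS" unfolding rel_on_def SS_def using finMM
    by (metis Max_in subsetD)
  show "S1 MM SS" unfolding S1_def SS_def using finMM Max_in by blast
  show "S2 MM SS" unfolding S2_def SS_def by blast
  show "S3 MM SS" unfolding S3_def SS_def
  proof (intro ballI allI impI)
    fix x y X Y assume a: "X \<subseteq> MM \<and> Y \<subseteq> MM" and b: "(X \<subseteq> MM \<and> X \<noteq> {} \<and> x = Max X) \<and> (Y \<subseteq> MM \<and> Y \<noteq> {} \<and> y = Max Y) \<and> x \<in> Y"
    have f: "finite X" "finite Y" using a finMM by auto
    have "Max (X \<union> Y) = max (Max X) (Max Y)" using f b by (simp add: Max_Un)
    moreover have "Max X \<le> Max Y" using b f by (metis Max_ge)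
    ultimately show "X \<union> Y \<subseteq> MM \<and> X \<union> Y \<noteq> {} \<and> y = Max (X \<union> Y)" using a b by auto
  qed
  show "S4 MM SS" unfolding S4_def
  proof (intro ballI allI impI)
    fix x y X Y assume a: "X \<subseteq> MM \<and> Y \<subseteq> MM" and b: "SS x X \<and> SS x Y \<and> y \<in> Y"
    then obtain z where z: "z \<in> X" unfolding SS_def by auto
    have "soverlaps MM SS z y" using ovl a b z by blast
    then show "\<exists>z\<in>X. \<exists>Z U. Z \<subseteq> MM \<and> U \<subseteq> MM \<and> SS z Z \<and> SS y U \<and> Z \<inter> U \<noteq> {}"
      using z unfolding soverlaps_def by blast
  qed
  show "SSigma MM SS" unfolding SSigma_def
  proof (intro ballI allI impI)
    fix x A assume a: "A \<subseteq> Pow MM \<and> A \<noteq> {} \<and> (\<forall>B\<in>A. SS x B)"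
    have sub: "\<Union>A \<subseteq> MM" using a by auto
    then have f: "finite (\<Union>A)" using finMM by auto
    obtain B where B: "B \<in> A" using a by auto
    have "x \<in> B" using a B finMM Max_in unfolding SS_def by metis
    then have xin: "x \<in> \<Union>A" using B by auto
    have le: "\<forall>y\<in>\<Union>A. y \<le> x"
    proof
      fix y assume "y \<in> \<Union>A"
      then obtain C where "C \<in> A" "y \<in> C" by auto
      then show "y \<le> x" using a finMM unfolding SS_def by (metis Max_ge)
    qed
    have "Max (\<Union>A) = x" using f xin le by (intro Max_eqI) auto
    then show "SS x (\<Union>A)" unfolding SS_def using sub xin by auto
  qed
  show "singleton_cond MM SS" unfolding singleton_cond_def SS_def by auto
  show "\<not> S5 MM SS"
  proof
    assume h: "S5 MM SS"
    have I1: "Iel MM SS 1 = {0,1}"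
      unfolding Iel_def below_def SS_def MM_def
      by (auto intro!: exI[of _ "{0,1}"])
    have I0: "Iel MM SS 0 = {0}"
      unfolding Iel_def below_def SS_def MM_def
      apply auto
      by (metis Max_ge finite.emptyI finite.insertI finite_subset le_zero_eq One_nat_def zero_neq_one)
    have "predense MM SS {0} (Iel MM SS 1)" unfolding predense_def I1
      using ovl unfolding MM_def by auto
    then have "SS 1 (Iel MM SS 1 \<inter> Iset MM SS {0})" using h unfolding S5_def MM_def by auto
    moreover have "Iel MM SS 1 \<inter> Iset MM SS {0} = {0}" using I1 by (simp add: Iset_def I0)
    ultimately show False unfolding SS_def by auto
  qed
qed

end
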